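(* For every integer $n\geq 2$, $\operatorname{adim}(P_2\square P_n)\leq \left\lceil \frac{3n-1}{4}\right\rceil$.
   Context: $P_n$ is the path on $n$ vertices and $\square$ is the Cartesian product of graphs. For a graph $G$, $d(u,v)$ is the shortest-path distance and $d_1(u,v)=\min(d(u,v),2)$. A set $A\subseteq V(G)$ is an adjacency resolving set if for all distinct $x,y\in V(G)$ there is $z\in A$ with $d_1(z,x)\neq d_1(z,y)$; $\operatorname{adim}(G)$ is the minimum cardinality of an adjacency resolving set. *)

theory Defs
  imports Main "HOL-Library.Extended_Nat"
begin

text \<open>A (simple) graph is given by a vertex set V and a symmetric irreflexive
adjacency relation E restricted to V.\<close>

fun walk :: "('a \<Rightarrow> 'a \<Rightarrow> bool) \<Rightarrow> 'a list \<Rightarrow> bool" where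
  "walk E [] = True"
| "walk E [x] = True"
| "walk E (x # y # xs) = (E x y \<and> walk E (y # xs))"

text \<open>Shortest-path distance (infinity if there is no path); a walk with
k+1 vertices has length k.\<close>
definition gdist :: "'a set \<Rightarrow> ('a \<Rightarrow> 'a \<Rightarrow> bool) \<Rightarrow> 'a \<Rightarrow> 'a \<Rightarrow> enat" where
  "gdist V E u v = (INF xs \<in> {xs. xs \<noteq> [] \<and> set xs \<subseteq> V \<and> walk E xs \<and> hd xs = u \<and> last xs = v}.
                      enat (length xs - 1))"

definition gdist1 :: "'a set \<Rightarrow> ('a \<Rightarrow> 'a \<Rightarrow> bool) \<Rightarrow> 'a \<Rightarrow> 'a \<Rightarrow> enat" where
  "gdist1 V E u v = min (gdist V E u v) 2"

definition adj_resolving :: "'a set \<Rightarrow> ('a \<Rightarrow> 'a \<Rightarrow> bool) \<Rightarrow> 'a set \<Rightarrow> bool" where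
  "adj_resolving V E A \<longleftrightarrow> A \<subseteq> V \<and>
     (\<forall>x\<in>V. \<forall>y\<in>V. x \<noteq> y \<longrightarrow> (\<exists>z\<in>A. gdist1 V E z x \<noteq> gdist1 V E z y))"

definition adim :: "'a set \<Rightarrow> ('a \<Rightarrow> 'a \<Rightarrow> bool) \<Rightarrow> nat" where
  "adim V E = (LEAST k. \<exists>A. finite A \<and> adj_resolving V E A \<and> card A = k)"

definition path_V :: "nat \<Rightarrow> nat set" where
  "path_V n = {0..<n}"

definition path_E :: "nat \<Rightarrow> nat \<Rightarrow> nat \<Rightarrow> bool" where
  "path_E n i j \<longleftrightarrow> i < n \<and> j < n \<and> (j = i + 1 \<or> i = j + 1)"

definition cart_V :: "'a set \<Rightarrow> 'b set \<Rightarrow> ('a \<times> 'b) set" where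
  "cart_V V1 V2 = V1 \<times> V2"

definition cart_E :: "'a set \<Rightarrow> ('a \<Rightarrow> 'a \<Rightarrow> bool) \<Rightarrow> 'b set \<Rightarrow> ('b \<Rightarrow> 'b \<Rightarrow> bool)
    \<Rightarrow> 'a \<times> 'b \<Rightarrow> 'a \<times> 'b \<Rightarrow> bool" where
  "cart_E V1 E1 V2 E2 p q \<longleftrightarrow> p \<in> V1 \<times> V2 \<and> q \<in> V1 \<times> V2 \<and>
     ((fst p = fst q \<and> E2 (snd p) (snd q)) \<or> (snd p = snd q \<and> E1 (fst p) (fst q)))"

end

theory Submission
  imports Defs
begin

definition P8 :: "nat \<Rightarrow> nat \<Rightarrow> bool" where
 "P8 a r = (r = 2 \<or> r = 6 \<or> (r = 0 \<and> a = 0) \<or> (r = 4 \<and> a = 1))"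
definition ccr :: "nat \<Rightarrow> nat" where
 "ccr s = (if s = 1 \<or> s = 5 then 0 else if s = 0 \<or> s = 4 then 2 else 1)"
definition eer :: "nat \<Rightarrow> nat" where
 "eer s = (if s = 2 \<or> s = 3 \<or> s = 4 then 0 else 1)"
definition cc :: "nat \<Rightarrow> nat" where "cc n = ccr (n mod 8)"
definition ee :: "nat \<Rightarrow> nat" where "ee n = eer (n mod 8)"
definition inA :: "nat \<Rightarrow> nat \<Rightarrow> nat \<Rightarrow> bool" where
 "inA n a i = (a < 2 \<and> i < n \<and> (if i + cc n < n then P8 a (i mod 8) else a = ee n))"
definition adjv :: "nat \<Rightarrow> nat \<Rightarrow> nat \<Rightarrow> nat \<Rightarrow> bool" where
 "adjv a i b j = ((a = b \<and> (j = i + 1 \<or> i = j + 1)) \<or> (i = j \<and> a \<noteq> b))"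
definition wit :: "nat \<Rightarrow> nat \<Rightarrow> nat \<Rightarrow> nat \<Rightarrow> nat \<Rightarrow> nat \<Rightarrow> nat \<Rightarrow> bool" where
 "wit n a i b j c e = (inA n c e \<and> adjv c e a i \<noteq> adjv c e b j)"

lemma cc_le: "cc n \<le> 2" by (simp add: cc_def ccr_def)

lemma ina_int:
  assumes "k mod 8 = r" "k + m + 2 < n"
  shows "inA n x (k + m) = (x < 2 \<and> P8 x ((r + m) mod 8))"
proof -
  have "(k + m) mod 8 = (r + m) mod 8" using mod_add_left_eq[of k 8 m] assms(1) by simp
  moreover have "k + m + cc n < n" using cc_le[of n] assms(2) by linarith
  ultimately show ?thesis unfolding inA_def using assms by auto
qed

lemma ina_end:
  assumes "k mod 8 = r" "n = k + d"
  shows "inA n x (k + m) = (x < 2 \<and> m < d \<and> (if m + ccr ((r + d) mod 8) < d then P8 x ((r + m) mod 8)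
     else x = eer ((r + d) mod 8)))"
proof -
  have "(k + m) mod 8 = (r + m) mod 8" using mod_add_left_eq[of k 8 m] assms(1) by simp
  moreover have "n mod 8 = (r + d) mod 8" using mod_add_left_eq[of k 8 d] assms by simp
  ultimately show ?thesis unfolding inA_def cc_def ee_def using assms by auto
qed

lemma sucs: "Suc k = k + 1" "Suc (Suc k) = k + 2" "Suc (Suc (Suc k)) = k + 3" "Suc (Suc (Suc (Suc k))) = k + 4"
  by simp_all

lemma core_int:
  assumes "a < 2" "b < 2" "k mod 8 = r" "k + 7 \<le> n" "j = Suc k + t" "t \<le> 2" "(a, Suc k) \<noteq> (b, j)"
   "\<not> inA n a (Suc k)" "\<not> inA n b j"
  shows "wit n a (Suc k) b j (1-a) (Suc k) \<or> wit n a (Suc k) b j a (Suc k + 1) \<or> wit n a (Suc k) b j a k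
     \<or> wit n a (Suc k) b j (1-b) j \<or> wit n a (Suc k) b j b (j+1) \<or> wit n a (Suc k) b j b (j-1)"
proof -
  have ina: "inA n x (k + m) = (x < 2 \<and> P8 x ((r + m) mod 8))" if "m \<le> 4" for x m
    using ina_int[OF assms(3), of m n x] assms(4) that by simp
  have i0: "inA n x k = (x < 2 \<and> P8 x r)" for x using ina[of 0 x] assms(3) by simp
  have i1: "inA n x (Suc k) = (x < 2 \<and> P8 x ((r + 1) mod 8))" for x unfolding sucs(1) by (rule ina) simp
  have i2: "inA n x (Suc (Suc k)) = (x < 2 \<and> P8 x ((r + 2) mod 8))" for x unfolding sucs(2) by (rule ina) simp
  have i3: "inA n x (Suc (Suc (Suc k))) = (x < 2 \<and> P8 x ((r + 3) mod 8))" for x unfolding sucs(3) by (rule ina) simp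
  have i4: "inA n x (Suc (Suc (Suc (Suc k)))) = (x < 2 \<and> P8 x ((r + 4) mod 8))" for x unfolding sucs(4) by (rule ina) simp
  have "a = 0 \<or> a = 1" "b = 0 \<or> b = 1" using assms by auto
  moreover have "t = 0 \<or> t = 1 \<or> t = 2" using assms by auto
  moreover have "r < 8" using assms(3) by auto
  hence "r = 0 \<or> r = 1 \<or> r = 2 \<or> r = 3 \<or> r = 4 \<or> r = 5 \<or> r = 6 \<or> r = 7" by auto
  ultimately show ?thesis using assms(5-9)
    apply (elim disjE)
    apply (simp_all add: wit_def adjv_def i0 i1 i2 i3 i4 P8_def)
    done
qed

lemma core_end:
  assumes "a < 2" "b < 2" "k mod 8 = r" "n = k + d" "2 \<le> d" "d \<le> 6" "j = Suc k + t" "t \<le> 2" "j < n" "(a, Suc k) \<noteq> (b, j)"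
   "\<not> inA n a (Suc k)" "\<not> inA n b j"
  shows "wit n a (Suc k) b j (1-a) (Suc k) \<or> wit n a (Suc k) b j a (Suc k + 1) \<or> wit n a (Suc k) b j a k
     \<or> wit n a (Suc k) b j (1-b) j \<or> wit n a (Suc k) b j b (j+1) \<or> wit n a (Suc k) b j b (j-1)"
proof -
  note ina = ina_end[OF assms(3,4)]
  have i0: "inA n x k = (x < 2 \<and> 0 < d \<and> (if ccr ((r + d) mod 8) < d then P8 x r else x = eer ((r + d) mod 8)))" for x
    using ina[of x 0] assms(3) by simp
  have i1: "inA n x (Suc k) = (x < 2 \<and> 1 < d \<and> (if 1 + ccr ((r + d) mod 8) < d then P8 x ((r + 1) mod 8) else x = eer ((r + d) mod 8)))" for x unfolding sucs(1) by (rule ina)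
  have i2: "inA n x (Suc (Suc k)) = (x < 2 \<and> 2 < d \<and> (if 2 + ccr ((r + d) mod 8) < d then P8 x ((r + 2) mod 8) else x = eer ((r + d) mod 8)))" for x unfolding sucs(2) by (rule ina)
  have i3: "inA n x (Suc (Suc (Suc k))) = (x < 2 \<and> 3 < d \<and> (if 3 + ccr ((r + d) mod 8) < d then P8 x ((r + 3) mod 8) else x = eer ((r + d) mod 8)))" for x unfolding sucs(3) by (rule ina)
  have i4: "inA n x (Suc (Suc (Suc (Suc k)))) = (x < 2 \<and> 4 < d \<and> (if 4 + ccr ((r + d) mod 8) < d then P8 x ((r + 4) mod 8) else x = eer ((r + d) mod 8)))" for x unfolding sucs(4) by (rule ina)
  have td: "t + 1 < d" using assms by simp
  have "a = 0 \<or> a = 1" "b = 0 \<or> b = 1" using assms by auto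
  moreover have "t = 0 \<or> t = 1 \<or> t = 2" using assms by auto
  moreover have "d = 2 \<or> d = 3 \<or> d = 4 \<or> d = 5 \<or> d = 6" using assms by auto
  moreover have "r < 8" using assms(3) by auto
  hence "r = 0 \<or> r = 1 \<or> r = 2 \<or> r = 3 \<or> r = 4 \<or> r = 5 \<or> r = 6 \<or> r = 7" by auto
  ultimately show ?thesis using assms(7,10-12) td
    apply (elim disjE)
    apply (simp_all add: wit_def adjv_def i0 i1 i2 i3 i4 P8_def ccr_def eer_def)
    done
qed

lemma zero_int:
  assumes "a < 2" "b < 2" "6 \<le> n" "j \<le> 2" "(a, 0) \<noteq> (b, j)"
   "\<not> inA n a 0" "\<not> inA n b j"
  shows "wit n a 0 b j (1-a) 0 \<or> wit n a 0 b j a 1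
     \<or> wit n a 0 b j (1-b) j \<or> wit n a 0 b j b (j+1) \<or> wit n a 0 b j b (j-1)"
proof -
  have ina: "inA n x m = (x < 2 \<and> P8 x (m mod 8))" if "m \<le> 3" for x m
    using ina_int[of 0 0 m n x] assms(3) that by simp
  have "a = 0 \<or> a = 1" "b = 0 \<or> b = 1" using assms by auto
  moreover have "j = 0 \<or> j = 1 \<or> j = 2" using assms by auto
  ultimately show ?thesis using assms(5-7)
    apply (elim disjE)
    apply (simp_all add: wit_def adjv_def ina P8_def)
    done
qed

lemma zero_end:
  assumes "a < 2" "b < 2" "2 \<le> n" "n \<le> 5" "j \<le> 2" "j < n" "(a, 0) \<noteq> (b, j)"
   "\<not> inA n a 0" "\<not> inA n b j"
  shows "wit n a 0 b j (1-a) 0 \<or> wit n a 0 b j a 1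
     \<or> wit n a 0 b j (1-b) j \<or> wit n a 0 b j b (j+1) \<or> wit n a 0 b j b (j-1)"
proof -
  have "a = 0 \<or> a = 1" "b = 0 \<or> b = 1" using assms by auto
  moreover have "j = 0 \<or> j = 1 \<or> j = 2" using assms by auto
  moreover have "n = 2 \<or> n = 3 \<or> n = 4 \<or> n = 5" using assms by auto
  ultimately show ?thesis using assms(6-9)
    apply (elim disjE)
    apply (simp_all add: wit_def adjv_def inA_def cc_def ee_def P8_def ccr_def eer_def)
    done
qed

definition dm :: "nat \<Rightarrow> nat \<Rightarrow> nat \<Rightarrow> nat \<Rightarrow> nat \<Rightarrow> bool" where
  "dm n a i c e = (inA n c e \<and> adjv c e a i)"

lemma dom_int:
  assumes "a < 2" "k mod 8 = r" "k + 7 \<le> n" "\<not> inA n a (Suc k)"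
  shows "dm n a (Suc k) (1-a) (Suc k) \<or> dm n a (Suc k) a (Suc (Suc k)) \<or> dm n a (Suc k) a k"
proof -
  have ina: "inA n x (k + m) = (x < 2 \<and> P8 x ((r + m) mod 8))" if "m \<le> 4" for x m
    using ina_int[OF assms(2), of m n x] assms(3) that by simp
  have i0: "inA n x k = (x < 2 \<and> P8 x r)" for x using ina[of 0 x] assms(2) by simp
  have i1: "inA n x (Suc k) = (x < 2 \<and> P8 x ((r + 1) mod 8))" for x unfolding sucs(1) by (rule ina) simp
  have i2: "inA n x (Suc (Suc k)) = (x < 2 \<and> P8 x ((r + 2) mod 8))" for x unfolding sucs(2) by (rule ina) simp
  have "a = 0 \<or> a = 1" using assms by auto
  moreover have "r < 8" using assms(2) by auto
  hence "r = 0 \<or> r = 1 \<or> r = 2 \<or> r = 3 \<or> r = 4 \<or> r = 5 \<or> r = 6 \<or> r = 7" by auto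
  ultimately show ?thesis using assms(4)
    apply (elim disjE)
    apply (simp_all add: dm_def adjv_def i0 i1 i2 P8_def)
    done
qed

lemma dom_end:
  assumes "a < 2" "k mod 8 = r" "n = k + d" "5 \<le> d" "d \<le> 6" "\<not> inA n a (Suc k)"
  shows "dm n a (Suc k) (1-a) (Suc k) \<or> dm n a (Suc k) a (Suc (Suc k)) \<or> dm n a (Suc k) a k"
proof -
  note ina = ina_end[OF assms(2,3)]
  have i0: "inA n x k = (x < 2 \<and> 0 < d \<and> (if ccr ((r + d) mod 8) < d then P8 x r else x = eer ((r + d) mod 8)))" for x
    using ina[of x 0] assms(2) by simp
  have i1: "inA n x (Suc k) = (x < 2 \<and> 1 < d \<and> (if 1 + ccr ((r + d) mod 8) < d then P8 x ((r + 1) mod 8) else x = eer ((r + d) mod 8)))" for x unfolding sucs(1) by (rule ina)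
  have i2: "inA n x (Suc (Suc k)) = (x < 2 \<and> 2 < d \<and> (if 2 + ccr ((r + d) mod 8) < d then P8 x ((r + 2) mod 8) else x = eer ((r + d) mod 8)))" for x unfolding sucs(2) by (rule ina)
  have "a = 0 \<or> a = 1" using assms by auto
  moreover have "d = 5 \<or> d = 6" using assms by auto
  moreover have "r < 8" using assms(2) by auto
  hence "r = 0 \<or> r = 1 \<or> r = 2 \<or> r = 3 \<or> r = 4 \<or> r = 5 \<or> r = 6 \<or> r = 7" by auto
  ultimately show ?thesis using assms(6)
    apply (elim disjE)
    apply (simp_all add: dm_def adjv_def i0 i1 i2 P8_def ccr_def eer_def)
    done
qed

lemma dom_zero:
  assumes "a < 2" "2 \<le> n" "\<not> inA n a 0"
  shows "dm n a 0 (1-a) 0 \<or> dm n a 0 a 1"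
proof -
  have "inA n 0 0"
  proof (cases "6 \<le> n")
    case True thus ?thesis using ina_int[of 0 0 0 n 0] by (simp add: P8_def)
  next
    case False
    hence "n = 2 \<or> n = 3 \<or> n = 4 \<or> n = 5" using assms by auto
    thus ?thesis using ina_end[of 0 0 n n 0 0] by (auto simp: P8_def ccr_def eer_def)
  qed
  thus ?thesis using assms by (cases "a = 0") (auto simp: dm_def adjv_def)
qed


lemma core:
  assumes "a < 2" "b < 2" "i < n" "j < n" "2 \<le> n" "i \<le> j" "j \<le> i + 2" "(a, i) \<noteq> (b, j)"
    "\<not> inA n a i" "\<not> inA n b j"
  shows "\<exists>c e. wit n a i b j c e"
proof (cases i)
  case 0
  show ?thesis
  proof (cases "6 \<le> n")
    case True
    from zero_int[of a b n j] assms 0 True show ?thesis by auto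
  next
    case False
    hence "n \<le> 5" by simp
    from zero_end[of a b n j, OF _ _ _ this] assms 0 show ?thesis by auto
  qed
next
  case (Suc k)
  define r where "r = k mod 8"
  define t where "t = j - Suc k"
  have jt: "j = Suc k + t" "t \<le> 2" using assms Suc unfolding t_def by auto
  show ?thesis
  proof (cases "k + 7 \<le> n")
    case True
    from core_int[of a b k r n j t, OF _ _ r_def[symmetric] True jt] assms Suc show ?thesis by blast
  next
    case False
    define d where "d = n - k"
    have nd: "n = k + d" "2 \<le> d" "d \<le> 6" using False assms Suc unfolding d_def by auto
    from core_end[of a b k r n d j t, OF _ _ r_def[symmetric] nd jt] assms Suc show ?thesis by blast
  qed
qed

lemma domi:
  assumes "a < 2" "i < n" "2 \<le> n" "i + 4 \<le> n" "\<not> inA n a i"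
  shows "\<exists>c e. dm n a i c e \<and> e \<le> i + 1"
proof (cases i)
  case 0
  from dom_zero[of a n] assms 0 show ?thesis by auto
next
  case (Suc k)
  define r where "r = k mod 8"
  show ?thesis
  proof (cases "k + 7 \<le> n")
    case True
    from dom_int[of a k r n, OF _ r_def[symmetric] True] assms Suc
    have "dm n a (Suc k) (1-a) (Suc k) \<or> dm n a (Suc k) a (Suc (Suc k)) \<or> dm n a (Suc k) a k" by auto
    thus ?thesis unfolding Suc by (elim disjE) (rule exI, rule exI, rule conjI, assumption, simp)+
  next
    case False
    define d where "d = n - k"
    have nd: "n = k + d" "5 \<le> d" "d \<le> 6" using False assms Suc unfolding d_def by auto
    from dom_end[of a k r n d, OF _ r_def[symmetric] nd] assms Suc
    have "dm n a (Suc k) (1-a) (Suc k) \<or> dm n a (Suc k) a (Suc (Suc k)) \<or> dm n a (Suc k) a k" by auto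
    thus ?thesis unfolding Suc by (elim disjE) (rule exI, rule exI, rule conjI, assumption, simp)+
  qed
qed

lemma sep_le:
  assumes "a < 2" "b < 2" "i < n" "j < n" "2 \<le> n" "i \<le> j" "(a, i) \<noteq> (b, j)"
    "\<not> inA n a i" "\<not> inA n b j"
  shows "\<exists>c e. wit n a i b j c e"
proof (cases "j \<le> i + 2")
  case True
  thus ?thesis using core assms by blast
next
  case False
  then obtain c e where ce: "dm n a i c e" "e \<le> i + 1" using domi[of a i n] assms by auto
  have "\<not> adjv c e b j" using ce(2) False unfolding adjv_def by auto
  thus ?thesis using ce unfolding dm_def wit_def by auto
qed

lemma sep:
  assumes "a < 2" "b < 2" "i < n" "j < n" "2 \<le> n" "(a, i) \<noteq> (b, j)"
    "\<not> inA n a i" "\<not> inA n b j"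
  shows "\<exists>c e. wit n a i b j c e"
proof (cases "i \<le> j")
  case True
  thus ?thesis using sep_le assms by blast
next
  case False
  then obtain c e where "wit n b j a i c e" using sep_le[of b a j n i] assms by auto
  hence "wit n a i b j c e" unfolding wit_def by auto
  thus ?thesis by blast
qed

lemma gd1:
  assumes "u \<in> V" "v \<in> V"
  shows "gdist1 V E u v = (if u = v then 0 else if E u v then 1 else 2)"
proof -
  let ?S = "{xs. xs \<noteq> [] \<and> set xs \<subseteq> V \<and> walk E xs \<and> hd xs = u \<and> last xs = v}"
  have lb1: "2 \<le> length xs" if "u \<noteq> v" "xs \<in> ?S" for xs
  proof (rule ccontr)
    assume "\<not> 2 \<le> length xs"
    moreover have "0 < length xs" using that(2) by auto
    ultimately have "length xs = Suc 0" by linarith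
    then obtain w where "xs = [w]" by (auto simp: length_Suc_conv)
    hence "hd xs = last xs" by simp
    with that show False by auto
  qed
  have lb2: "3 \<le> length xs" if "u \<noteq> v" "\<not> E u v" "xs \<in> ?S" for xs
  proof (rule ccontr)
    assume "\<not> 3 \<le> length xs"
    moreover have "2 \<le> length xs" using lb1 that by blast
    ultimately have "length xs = Suc (Suc 0)" by linarith
    then obtain w w' where "xs = [w, w']" by (auto simp: length_Suc_conv)
    with that show False by auto
  qed
  show ?thesis
  proof (cases "u = v")
    case True
    have "[u] \<in> ?S" using assms True by auto
    hence "gdist V E u v \<le> enat 0" unfolding gdist_def by (rule INF_lower2) simp
    hence "gdist V E u v = 0" by (metis le_zero_eq zero_enat_def)
    thus ?thesis using True by (simp add: gdist1_def)
  next
    case False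
    show ?thesis
    proof (cases "E u v")
      case True
      have "[u, v] \<in> ?S" using assms True by auto
      hence "gdist V E u v \<le> enat 1" unfolding gdist_def by (rule INF_lower2) simp
      moreover have "enat 1 \<le> gdist V E u v" unfolding gdist_def
        by (rule INF_greatest) (use lb1 False in force)
      ultimately have "gdist V E u v = 1" by (simp add: one_enat_def)
      thus ?thesis using True False by (simp add: gdist1_def)
    next
      case nE: False
      have "enat 2 \<le> gdist V E u v" unfolding gdist_def
        by (rule INF_greatest) (use lb2 False nE in force)
      hence "gdist1 V E u v = 2" unfolding gdist1_def by (simp add: numeral_eq_enat min_def)
      thus ?thesis using nE False by simp
    qed
  qed
qed

lemma V_eq: "cart_V (path_V 2) (path_V n) = {p. fst p < 2 \<and> snd p < n}"
  by (auto simp: cart_V_def path_V_def)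

lemma E_eq: "cart_E (path_V 2) (path_E 2) (path_V n) (path_E n) (a, i) (b, j)
   = (a < 2 \<and> i < n \<and> b < 2 \<and> j < n \<and> adjv a i b j)"
  by (auto simp: cart_E_def path_V_def path_E_def adjv_def)

definition AA :: "nat \<Rightarrow> (nat \<times> nat) set" where
  "AA n = {p. inA n (fst p) (snd p)}"

lemma resolving:
  assumes "2 \<le> n"
  shows "adj_resolving (cart_V (path_V 2) (path_V n)) (cart_E (path_V 2) (path_E 2) (path_V n) (path_E n)) (AA n)"
proof -
  let ?V = "cart_V (path_V 2) (path_V n)"
  let ?E = "cart_E (path_V 2) (path_E 2) (path_V n) (path_E n)"
  have sub: "AA n \<subseteq> ?V" unfolding V_eq AA_def inA_def by auto
  have "\<exists>z\<in>AA n. gdist1 ?V ?E z x \<noteq> gdist1 ?V ?E z y" if x: "x \<in> ?V" and y: "y \<in> ?V" and xy: "x \<noteq> y" for x y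
  proof (cases "x \<in> AA n")
    case True
    have "gdist1 ?V ?E x x \<noteq> gdist1 ?V ?E x y" using gd1[OF x x, where E = ?E] gd1[OF x y, where E = ?E] xy by simp
    thus ?thesis using True by blast
  next
    case nx: False
    show ?thesis
    proof (cases "y \<in> AA n")
      case True
      have "gdist1 ?V ?E y x \<noteq> gdist1 ?V ?E y y" using gd1[OF y x, where E = ?E] gd1[OF y y, where E = ?E] xy by simp
      thus ?thesis using True by blast
    next
      case ny: False
      obtain a i where xa: "x = (a, i)" by (cases x)
      obtain b j where yb: "y = (b, j)" by (cases y)
      have bnd: "a < 2" "i < n" "b < 2" "j < n" using x y xa yb unfolding V_eq by auto
      obtain c e where w: "wit n a i b j c e"
        using sep[of a b i n j] bnd assms xy nx ny xa yb unfolding AA_def by auto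
      have zA: "(c, e) \<in> AA n" and ce: "c < 2" "e < n" using w unfolding wit_def AA_def inA_def by auto
      have zV: "(c, e) \<in> ?V" using zA sub by blast
      have "(c, e) \<noteq> x" "(c, e) \<noteq> y" using zA nx ny by auto
      hence "gdist1 ?V ?E (c, e) x \<noteq> gdist1 ?V ?E (c, e) y"
        using gd1[OF zV x, where E = ?E] gd1[OF zV y, where E = ?E] w ce bnd unfolding wit_def xa yb E_eq by auto
      thus ?thesis using zA by blast
    qed
  qed
  thus ?thesis using sub unfolding adj_resolving_def by blast
qed


definition gg :: "nat \<Rightarrow> nat" where
  "gg r = (if P8 0 r then 1 else 0) + (if P8 1 r then 1 else 0)"

definition GG :: "nat \<Rightarrow> nat" where
  "GG s = (\<Sum>i<s. gg i)"

lemma GG_vals: "GG 0 = 0" "GG 1 = 1" "GG 2 = 1" "GG 3 = 3" "GG 4 = 3" "GG 5 = 4" "GG 6 = 4" "GG 7 = 6" "GG 8 = 6"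
  by (simp_all add: GG_def gg_def P8_def lessThan_Suc numeral_nat)

lemma GG_one: "GG (Suc 0) = 1" using GG_vals(2) by simp

lemma sum_split: "(\<Sum>i<m + c. f i) = (\<Sum>i<m. f i) + (\<Sum>i<c. f (m + i))" for f :: "nat \<Rightarrow> nat"
  by (induction c) simp_all

lemma col_card: "card {a. inA n a i} = (if inA n 0 i then 1 else 0) + (if inA n 1 i then 1 else 0)"
proof -
  have "{a. inA n a i} = (if inA n 0 i then {0} else {}) \<union> (if inA n 1 i then {1} else {})"
  proof -
    have "a = 0 \<or> a = 1" if "inA n a i" for a using that by (auto simp: inA_def)
    thus ?thesis by auto
  qed
  thus ?thesis by simp
qed

lemma g8: "(\<Sum>i<8. gg ((s + i) mod 8)) = 6" if "s \<le> 8"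
proof -
  have e: "(\<Sum>i<8. f i) = f 0 + f 1 + f 2 + f 3 + f 4 + f 5 + f 6 + f 7" for f :: "nat \<Rightarrow> nat"
    by (simp add: lessThan_Suc eval_nat_numeral)
  have "s = 0 \<or> s = 1 \<or> s = 2 \<or> s = 3 \<or> s = 4 \<or> s = 5 \<or> s = 6 \<or> s = 7 \<or> s = 8" using that by auto
  thus ?thesis unfolding e by (elim disjE) (simp_all add: gg_def P8_def)
qed

lemma per_sum: "(\<Sum>i<8 * q + s. gg (i mod 8)) = 6 * q + GG s" if "s \<le> 8"
proof (induction q)
  case 0
  have "(\<Sum>i<s. gg (i mod 8)) = (\<Sum>i<s. gg i)" by (rule sum.cong) (use that in auto)
  thus ?case by (simp add: GG_def)
next
  case (Suc q)
  have "(\<Sum>i<8 * Suc q + s. gg (i mod 8)) = (\<Sum>i<8 * q + s + 8. gg (i mod 8))" by (simp add: algebra_simps)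
  also have "\<dots> = (\<Sum>i<8 * q + s. gg (i mod 8)) + (\<Sum>i<8. gg ((8 * q + s + i) mod 8))" by (rule sum_split)
  also have "(\<Sum>i<8. gg ((8 * q + s + i) mod 8)) = (\<Sum>i<8. gg ((s + i) mod 8))"
    by (rule sum.cong) (simp_all add: mod_add_left_eq add.assoc)
  also have "\<dots> = 6" by (rule g8[OF that])
  finally show ?case using Suc.IH by simp
qed

lemma card_bound:
  assumes "2 \<le> n"
  shows "4 * card (AA n) \<le> 3 * n + 2"
proof -
  have fin: "finite {a. inA n a i}" for i
    by (rule finite_subset[of _ "{..<2}"]) (auto simp: inA_def)
  have "AA n = (\<lambda>(i, a). (a, i)) ` (SIGMA i:{..<n}. {a. inA n a i})"
    unfolding AA_def by (auto simp: inA_def image_iff)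
  moreover have "inj_on (\<lambda>(i, a). (a, i)) (SIGMA i:{..<n}. {a. inA n a i})"
    by (auto simp: inj_on_def)
  ultimately have "card (AA n) = card (SIGMA i:{..<n}. {a. inA n a i})"
    by (simp add: card_image)
  also have "\<dots> = (\<Sum>i<n. card {a. inA n a i})" using fin by (simp add: card_SigmaI)
  finally have c1: "card (AA n) = (\<Sum>i<n. card {a. inA n a i})" .
  define c where "c = cc n"
  define m where "m = n - c"
  have cle: "c \<le> 2" unfolding c_def by (rule cc_le)
  have nm: "n = m + c" unfolding m_def using cle assms by simp
  have "(\<Sum>i<n. card {a. inA n a i}) = (\<Sum>i<m. card {a. inA n a i}) + (\<Sum>i<c. card {a. inA n a (m + i)})"
    unfolding nm by (rule sum_split)
  also have "(\<Sum>i<m. card {a. inA n a i}) = (\<Sum>i<m. gg (i mod 8))"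
  proof (rule sum.cong)
    fix i assume "i \<in> {..<m}"
    hence "i < m" by simp
    hence "i + cc n < n" "i < n" using nm c_def cle by linarith+
    hence "inA n 0 i = P8 0 (i mod 8)" "inA n 1 i = P8 1 (i mod 8)" by (simp_all add: inA_def)
    thus "card {a. inA n a i} = gg (i mod 8)" unfolding col_card gg_def by simp
  qed simp
  also have "(\<Sum>i<c. card {a. inA n a (m + i)}) = (\<Sum>i<c. 1)"
  proof (rule sum.cong)
    fix i assume "i \<in> {..<c}"
    hence "i < c" by simp
    hence "\<not> m + i + cc n < n" "m + i < n" using nm c_def by linarith+
    moreover have "ee n < 2" by (simp add: ee_def eer_def)
    ultimately have "inA n 0 (m + i) = (ee n = 0)" "inA n 1 (m + i) = (ee n = 1)" by (auto simp: inA_def)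
    moreover have "ee n = 0 \<or> ee n = 1" using \<open>ee n < 2\<close> by auto
    ultimately show "card {a. inA n a (m + i)} = 1" unfolding col_card by auto
  qed simp
  finally have c2: "card (AA n) = (\<Sum>i<m. gg (i mod 8)) + c" using c1 by simp
  define q where "q = m div 8"
  define s where "s = m mod 8"
  have ms: "m = 8 * q + s" "s < 8" unfolding q_def s_def by auto
  have c3: "card (AA n) = 6 * q + GG s + c" using c2 per_sum[of s q] ms by simp
  have nmod: "n mod 8 = (s + c) mod 8" using nm ms by (simp add: mod_add_left_eq add.assoc)
  have cval: "c = ccr ((s + c) mod 8)" using nmod unfolding c_def cc_def by simp
  have key: "4 * GG s + c \<le> 3 * s + 2"
  proof -
    have "s = 0 \<or> s = 1 \<or> s = 2 \<or> s = 3 \<or> s = 4 \<or> s = 5 \<or> s = 6 \<or> s = 7" using ms by auto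
    moreover have "c = 0 \<or> c = 1 \<or> c = 2" using cle by auto
    ultimately show ?thesis using cval by (elim disjE) (simp_all add: GG_vals GG_one ccr_def)
  qed
  show ?thesis using c3 key nm ms by simp
qed

theorem lemma4p8:
  fixes n :: nat
  assumes "n \<ge> 2"
  shows "int (adim (cart_V (path_V 2) (path_V n)) (cart_E (path_V 2) (path_E 2) (path_V n) (path_E n)))
           \<le> \<lceil>(3 * real n - 1) / 4\<rceil>"
proof -
  let ?V = "cart_V (path_V 2) (path_V n)"
  let ?E = "cart_E (path_V 2) (path_E 2) (path_V n) (path_E n)"
  have fin: "finite (AA n)"
    by (rule finite_subset[of _ "{..<2} \<times> {..<n}"]) (auto simp: AA_def inA_def)
  have "adim ?V ?E \<le> card (AA n)"
    unfolding adim_def by (rule Least_le) (use fin resolving[OF assms] in blast)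
  moreover have "4 * card (AA n) \<le> 3 * n + 2" using card_bound[OF assms] .
  ultimately have "4 * adim ?V ?E \<le> 3 * n + 2" by linarith
  hence "real (4 * adim ?V ?E) \<le> real (3 * n + 2)" by (simp only: of_nat_le_iff)
  hence "4 * real (adim ?V ?E) \<le> 3 * real n + 2" by simp
  hence "real_of_int (int (adim ?V ?E)) - 1 < (3 * real n - 1) / 4" by simp
  thus ?thesis by (simp add: le_ceiling_iff)
qed

end
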